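(* Let $0<a_1\le a_2$ and $q\ge 2$. Let $e_1,e_2,\ldots$ be a sequence of non-negative integers with $$a_1 q^n/n \le e_n \le a_2 q^n/n\quad\text{for all } n\ge1,$$ and define $d_0=1,d_1,d_2,\ldots$ by the formal power series identity $\sum_{n\ge0} d_n x^n = \prod_{n\ge1}(1-x^n)^{-e_n}$. Then there exist constants $A_1$ depending only on $a_1$ and $A_2$ depending only on $a_2$ such that for all $n\ge 0$, $$(n+1)^{A_1}q^n \le d_n \le (n+1)^{A_2}q^n.$$ *)

theory Defs
  imports Complex_Main "HOL-Computational_Algebra.Formal_Power_Series"
begin

text \<open>The n-th coefficient of the infinite product only depends on the factors with k <= n
  (the remaining factors are 1 + O(x^(n+1))), so it equals the n-th coefficient of the
  finite product over k = 1..n.\<close>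
definition euler_prod_coeff :: "(nat \<Rightarrow> nat) \<Rightarrow> nat \<Rightarrow> real" where
  "euler_prod_coeff e n =
     fps_nth (\<Prod>k\<in>{1..n}. (inverse (1 - fps_X ^ k :: real fps)) ^ (e k)) n"

end

theory Submission imports Defs begin
unbundle fps_syntax

definition G :: "nat \<Rightarrow> real fps" where
  "G k = Abs_fps (\<lambda>m. if k dvd m then 1 else 0)"

lemma G_inv: assumes "k \<ge> 1" shows "inverse (1 - fps_X ^ k :: real fps) = G k"
proof (rule fps_inverse_unique)
  show "(1 - fps_X ^ k) * G k = 1"
  proof (rule fps_ext)
    fix n
    show "((1 - fps_X ^ k) * G k) $ n = (1::real fps) $ n"
    proof (cases "n < k")
      case True
      then show ?thesis using assms
        by (auto simp: algebra_simps fps_X_power_mult_nth G_def dest: dvd_imp_le)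
    next
      case False
      have "k dvd n \<longleftrightarrow> k dvd (n - k)" using False
        by (metis dvd_minus_self le_add_diff_inverse not_less dvd_add_right_iff)
      then show ?thesis using False assms
        by (auto simp: algebra_simps fps_X_power_mult_nth G_def)
    qed
  qed
qed

definition nn :: "real fps \<Rightarrow> bool" where "nn F = (\<forall>i. F $ i \<ge> 0)"

lemma nn_mult: "nn F \<Longrightarrow> nn H \<Longrightarrow> nn (F * H)"
  unfolding nn_def fps_mult_nth by (auto intro!: sum_nonneg)

lemma nn_power: "nn F \<Longrightarrow> nn (F ^ e)"
  by (induction e) (simp_all add: nn_mult, simp add: nn_def)

lemma nn_prod: "(\<And>k. k \<in> S \<Longrightarrow> nn (f k)) \<Longrightarrow> nn (\<Prod>k\<in>S. f k)"
  by (induction S rule: infinite_finite_induct) (simp_all add: nn_mult, simp_all add: nn_def)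

lemma nn_G: "nn (G k)" by (simp add: nn_def G_def)

lemma prod_nth0: "(\<Prod>k\<in>S. f k :: real fps) $ 0 = (\<Prod>k\<in>S. f k $ 0)"
  by (induction S rule: infinite_finite_induct) auto

lemma mult_nth_ge: assumes "nn F" "nn H" "n \<ge> 1"
  shows "(F * H) $ n \<ge> F $ n * H $ 0 + F $ 0 * H $ n"
proof -
  have "(\<Sum>i\<in>{n,0}. F$i * H$(n - i)) \<le> (\<Sum>i=0..n. F$i * H$(n - i))"
    using assms by (intro sum_mono2) (auto simp: nn_def)
  thus ?thesis using assms by (simp add: fps_mult_nth)
qed

lemma G_power_nth: assumes "n \<ge> 1" shows "(G n ^ e) $ n \<ge> real e" "(G n ^ e) $ 0 = 1"
proof -
  show "(G n ^ e) $ 0 = 1" by (simp add: G_def fps_nth_power_0)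
  show "(G n ^ e) $ n \<ge> real e"
  proof (induction e)
    case (Suc e)
    have "(G n * G n ^ e) $ n \<ge> G n $ n * (G n ^ e) $ 0 + G n $ 0 * (G n ^ e) $ n"
      using assms by (intro mult_nth_ge nn_G nn_power)
    thus ?case using Suc by (simp add: G_def fps_nth_power_0)
  qed simp
qed

lemma coeff_eq: "euler_prod_coeff e n = (\<Prod>k\<in>{1..n}. G k ^ e k) $ n"
  unfolding euler_prod_coeff_def by (intro arg_cong[where f="\<lambda>F. F $ n"] prod.cong) (auto simp: G_inv)

lemma lower: assumes "n \<ge> 1" shows "euler_prod_coeff e n \<ge> real (e n)"
proof -
  obtain m where m: "n = Suc m" using assms by (cases n) auto
  have "(\<Prod>k\<in>{1..n}. G k ^ e k) = G n ^ e n * (\<Prod>k\<in>{1..m}. G k ^ e k)"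
    using m by (simp add: prod.cl_ivl_Suc)
  moreover have "(G n ^ e n * (\<Prod>k\<in>{1..m}. G k ^ e k)) $ n \<ge>
     (G n ^ e n) $ n * (\<Prod>k\<in>{1..m}. G k ^ e k) $ 0 + (G n ^ e n) $ 0 * (\<Prod>k\<in>{1..m}. G k ^ e k) $ n"
    using assms by (intro mult_nth_ge nn_power nn_G nn_prod)
  moreover have "(\<Prod>k\<in>{1..m}. G k ^ e k) $ n \<ge> 0" using nn_prod[of "{1..m}" "\<lambda>k. G k ^ e k"] nn_power nn_G unfolding nn_def by blast
  moreover have "(\<Prod>k\<in>{1..m}. G k ^ e k) $ 0 = 1" by (simp add: prod_nth0 G_def fps_nth_power_0)
  ultimately show ?thesis using G_power_nth[OF assms, of "e n"] by (simp add: coeff_eq)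
qed

definition T :: "nat \<Rightarrow> real fps \<Rightarrow> real \<Rightarrow> real" where
  "T n F x = (\<Sum>i\<le>n. F $ i * x ^ i)"

lemma T_nonneg: "nn F \<Longrightarrow> 0 \<le> x \<Longrightarrow> 0 \<le> T n F x"
  unfolding T_def nn_def by (auto intro!: sum_nonneg)

lemma T_mult: assumes "nn F" "nn H" "0 \<le> x"
  shows "T n (F * H) x \<le> T n F x * T n H x"
proof -
  have "T n (F * H) x = (\<Sum>i\<le>n. \<Sum>j\<le>i. (F$j * x^j) * (H$(i-j) * x^(i-j)))"
    unfolding T_def fps_mult_nth
    by (intro sum.cong refl) (auto simp: sum_distrib_right atLeast0AtMost power_add[symmetric]
        intro!: sum.cong)
  also have "\<dots> = (\<Sum>(j,l)\<in>{(j,l). j + l \<le> n}. (F$j * x^j) * (H$l * x^l))"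
    by (rule sum.triangle_reindex_eq[symmetric])
  also have "\<dots> \<le> (\<Sum>(j,l)\<in>{..n} \<times> {..n}. (F$j * x^j) * (H$l * x^l))"
    using assms by (intro sum_mono2) (auto simp: nn_def)
  also have "\<dots> = T n F x * T n H x"
    unfolding T_def by (simp add: sum_product sum.cartesian_product)
  finally show ?thesis .
qed

lemma T_one: "T n 1 x = 1"
proof -
  have "(\<Sum>i\<le>n. (1::real fps) $ i * x ^ i) = (\<Sum>i\<le>n. if i = 0 then 1 else 0)"
    by (intro sum.cong) (auto simp: fps_one_nth)
  thus ?thesis unfolding T_def by simp
qed

lemma T_power: assumes "nn F" "0 \<le> x" shows "T n (F ^ e) x \<le> T n F x ^ e"
proof (induction e)
  case 0 then show ?case by (simp add: T_one)
next
  case (Suc e)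
  have "T n (F * F ^ e) x \<le> T n F x * T n (F ^ e) x"
    using assms by (intro T_mult nn_power)
  also have "\<dots> \<le> T n F x * T n F x ^ e"
    using Suc assms by (intro mult_left_mono T_nonneg)
  finally show ?case by simp
qed

lemma T_prod: assumes "\<And>k. k \<in> S \<Longrightarrow> nn (f k)" "0 \<le> x"
  shows "T n (\<Prod>k\<in>S. f k) x \<le> (\<Prod>k\<in>S. T n (f k) x)"
  using assms(1)
proof (induction S rule: infinite_finite_induct)
  case (insert a S)
  have "T n (f a * (\<Prod>k\<in>S. f k)) x \<le> T n (f a) x * T n (\<Prod>k\<in>S. f k) x"
    using insert assms by (intro T_mult nn_prod) auto
  also have "\<dots> \<le> T n (f a) x * (\<Prod>k\<in>S. T n (f k) x)"
    using insert assms by (intro mult_left_mono T_nonneg) auto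
  finally show ?case using insert by simp
qed (auto simp: T_one)

lemma nth_le_T: assumes "nn F" "0 \<le> x" shows "F $ n * x ^ n \<le> T n F x"
  unfolding T_def using assms
  by (intro member_le_sum) (auto simp: nn_def)

lemma T_G: assumes "k \<ge> 1" "0 \<le> x" "x < 1" shows "T n (G k) x \<le> 1 / (1 - x ^ k)"
proof -
  have "T n (G k) x = (\<Sum>i\<in>{i\<in>{..n}. k dvd i}. x ^ i)"
    unfolding T_def G_def by (simp add: sum.inter_filter[symmetric] if_distrib[where f="\<lambda>c. c * _"] cong: if_cong)
  also have "\<dots> \<le> (\<Sum>i\<in>(\<lambda>m. k * m) ` {..n}. x ^ i)"
  proof (intro sum_mono2)
    show "{i \<in> {..n}. k dvd i} \<subseteq> (*) k ` {..n}"
    proof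
      fix i assume "i \<in> {i \<in> {..n}. k dvd i}"
      then obtain m where im: "i = k * m" "i \<le> n" by auto
      have "m \<le> i" using assms im by simp
      then have "m \<le> n" using im by linarith
      then show "i \<in> (*) k ` {..n}" using im by auto
    qed
  qed (use assms in auto)
  also have "\<dots> = (\<Sum>m\<le>n. (x ^ k) ^ m)"
    using assms by (subst sum.reindex) (auto simp: inj_on_def power_mult)
  also have "\<dots> \<le> 1 / (1 - x ^ k)"
  proof -
    have xk: "x ^ k < 1" "0 \<le> x ^ k" using assms by (auto simp: power_less_one_iff)
    have "(1 - x ^ k) * (\<Sum>m=0..n. (x ^ k) ^ m) = 1 - (x ^ k) ^ Suc n"
      using sum_gp_multiplied[of 0 n "x ^ k"] by simp
    also have "\<dots> \<le> 1" using xk by simp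
    finally show ?thesis using xk by (simp add: atLeast0AtMost field_simps)
  qed
  finally show ?thesis .
qed

lemma harm2: "(\<Sum>k=1..n. 1 / real k) \<le> 2 * ln (real n + 1)"
proof (induction n)
  case (Suc n)
  have "ln ((real n + 1) / (real n + 2)) \<le> (real n + 1) / (real n + 2) - 1"
    by (intro ln_le_minus_one) auto
  also have "\<dots> = - 1 / (real n + 2)" by (simp add: field_simps)
  finally have "ln (real n + 1) - ln (real n + 2) \<le> - 1 / (real n + 2)"
    by (simp add: ln_div)
  moreover have "1 / (real n + 1) \<le> 2 / (real n + 2)" by (simp add: field_simps)
  ultimately show ?case using Suc by (simp add: add.commute)
qed simp

lemma geom2: "(\<Sum>k=1..n. (1/2::real) ^ k) = 1 - (1/2) ^ n"
  by (induction n) (auto simp: field_simps)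

lemma factor_bound: assumes "0 \<le> z" "z \<le> 1/2"
  shows "(1 / (1 - z)) ^ e \<le> exp (real e * (z + 2 * z^2))"
proof -
  have "0 < 1 - z" using assms by simp
  hence "1 / (1 - z) = exp (- ln (1 - z))" by (simp add: exp_minus inverse_eq_divide)
  hence "(1 / (1 - z)) ^ e = exp (real e * (- ln (1 - z)))"
    by (simp add: exp_of_nat_mult[symmetric])
  also have "\<dots> \<le> exp (real e * (z + 2 * z^2))"
    using ln_one_minus_pos_lower_bound[OF assms] by (intro exp_mono mult_left_mono) auto
  finally show ?thesis .
qed

lemma upper:
  assumes q: "2 \<le> q" and a2: "0 \<le> a2" and eb: "\<And>k. k \<ge> 1 \<Longrightarrow> real (e k) \<le> a2 * q ^ k / real k"
  shows "euler_prod_coeff e n \<le> q ^ n * exp (2 * a2 * ln (real n + 1) + 2 * a2)"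
proof -
  define x where "x = 1 / q"
  have x: "0 \<le> x" "x \<le> 1/2" "x < 1" using q by (auto simp: x_def field_simps)
  have "euler_prod_coeff e n * x ^ n \<le> T n (\<Prod>k\<in>{1..n}. G k ^ e k) x"
    unfolding coeff_eq using x by (intro nth_le_T nn_prod nn_power nn_G)
  also have "\<dots> \<le> (\<Prod>k\<in>{1..n}. T n (G k ^ e k) x)"
    using x by (intro T_prod nn_power nn_G)
  also have "\<dots> \<le> (\<Prod>k\<in>{1..n}. (1 / (1 - x ^ k)) ^ e k)"
  proof (intro prod_mono conjI)
    fix k assume k: "k \<in> {1..n}"
    show "0 \<le> T n (G k ^ e k) x" using x by (intro T_nonneg nn_power nn_G)
    have "T n (G k ^ e k) x \<le> T n (G k) x ^ e k" using x by (intro T_power nn_G)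
    also have "\<dots> \<le> (1 / (1 - x ^ k)) ^ e k"
      using x k by (intro power_mono T_G T_nonneg nn_G) auto
    finally show "T n (G k ^ e k) x \<le> (1 / (1 - x ^ k)) ^ e k" .
  qed
  also have "\<dots> \<le> (\<Prod>k\<in>{1..n}. exp (real (e k) * (x ^ k + 2 * (x ^ k)^2)))"
  proof (intro prod_mono conjI)
    fix k assume k: "k \<in> {1..n}"
    have xk: "x ^ k \<le> x" using x k power_decreasing[of 1 k x] by auto
    have "x ^ k < 1" using x k by (simp add: power_less_one_iff)
    then show "0 \<le> (1 / (1 - x ^ k)) ^ e k" by simp
    show "(1 / (1 - x ^ k)) ^ e k \<le> exp (real (e k) * (x ^ k + 2 * (x ^ k)^2))"
      using x xk by (intro factor_bound) auto
  qed
  also have "\<dots> = exp (\<Sum>k\<in>{1..n}. real (e k) * (x ^ k + 2 * (x ^ k)^2))"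
    by (simp add: exp_sum)
  also have "\<dots> \<le> exp (\<Sum>k\<in>{1..n}. a2 * (1 / real k) + 2 * a2 * (1/2) ^ k)"
  proof (intro exp_mono sum_mono)
    fix k assume k: "k \<in> {1..n}"
    define w where "w = q ^ k"
    have w2: "(2::real) ^ k \<le> w" unfolding w_def using q by (intro power_mono) auto
    have wpos: "0 < w" using w2 by (smt (verit) zero_less_power)
    have xw: "x ^ k = 1 / w" by (simp add: x_def w_def power_one_over)
    have ek: "real (e k) / w \<le> a2 / real k"
      using eb[of k] k wpos by (simp add: w_def field_simps)
    have "1 / w \<le> 1 / 2 ^ k" using w2 wpos by (intro divide_left_mono) auto
    hence w1: "1 / w \<le> (1/2) ^ k" by (simp add: power_one_over)
    have "real (e k) / w / w \<le> a2 / real k / w"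
      using ek wpos by (intro divide_right_mono) auto
    also have "\<dots> \<le> a2 / w" using k a2 wpos
      by (intro divide_right_mono) (auto simp: field_simps intro: mult_left_mono[of 1 "real k" a2, simplified])
    also have "\<dots> = a2 * (1 / w)" by simp
    also have "\<dots> \<le> a2 * (1/2) ^ k" using w1 a2 by (intro mult_left_mono) auto
    finally have "real (e k) / w / w \<le> a2 * (1/2) ^ k" .
    then show "real (e k) * (x ^ k + 2 * (x ^ k)^2) \<le> a2 * (1 / real k) + 2 * a2 * (1/2) ^ k"
    proof -
      have "real (e k) * (x ^ k + 2 * (x ^ k)^2) = real (e k) / w + 2 * (real (e k) / w / w)"
        unfolding xw by (simp add: power2_eq_square algebra_simps)
      thus ?thesis using ek \<open>real (e k) / w / w \<le> a2 * (1/2) ^ k\<close> by simp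
    qed
  qed
  also have "\<dots> \<le> exp (2 * a2 * ln (real n + 1) + 2 * a2)"
  proof (intro exp_mono)
    have "(\<Sum>k\<in>{1..n}. a2 * (1 / real k) + 2 * a2 * (1/2) ^ k)
       = a2 * (\<Sum>k=1..n. 1 / real k) + 2 * a2 * (\<Sum>k=1..n. (1/2::real) ^ k)"
      by (simp add: sum.distrib sum_distrib_left)
    also have "\<dots> \<le> a2 * (2 * ln (real n + 1)) + 2 * a2 * 1"
      using a2 harm2[of n] geom2[of n] by (intro add_mono mult_left_mono) auto
    finally show "(\<Sum>k\<in>{1..n}. a2 * (1 / real k) + 2 * a2 * (1/2) ^ k) \<le> 2 * a2 * ln (real n + 1) + 2 * a2"
      by simp
  qed
  finally have "euler_prod_coeff e n * x ^ n \<le> exp (2 * a2 * ln (real n + 1) + 2 * a2)" .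
  moreover have "x ^ n * q ^ n = 1" using q by (simp add: x_def power_one_over field_simps)
  ultimately have "(euler_prod_coeff e n * x ^ n) * q ^ n \<le> exp (2 * a2 * ln (real n + 1) + 2 * a2) * q ^ n"
    using q by (intro mult_right_mono) auto
  also have "(euler_prod_coeff e n * x ^ n) * q ^ n = euler_prod_coeff e n * (x ^ n * q ^ n)"
    by (simp only: mult.assoc)
  finally show ?thesis using \<open>x ^ n * q ^ n = 1\<close> by (simp add: mult.commute)
qed

definition A1f :: "real \<Rightarrow> real" where "A1f a = min (-1) (log 2 a - 1)"
definition A2f :: "real \<Rightarrow> real" where "A2f a = 2*a + 2*a/ln 2"

theorem proposition2p2:
  "\<exists>A1 A2 :: real \<Rightarrow> real.
     \<forall>(a1::real) (a2::real) (q::real) (e::nat \<Rightarrow> nat).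
       0 < a1 \<longrightarrow> a1 \<le> a2 \<longrightarrow> 2 \<le> q \<longrightarrow>
       (\<forall>n\<ge>1. a1 * q ^ n / real n \<le> real (e n) \<and> real (e n) \<le> a2 * q ^ n / real n) \<longrightarrow>
       (\<forall>n::nat. (real n + 1) powr (A1 a1) * q ^ n \<le> euler_prod_coeff e n \<and>
                 euler_prod_coeff e n \<le> (real n + 1) powr (A2 a2) * q ^ n)"
proof (rule exI[of _ A1f], rule exI[of _ A2f], intro allI impI)
  fix a1 a2 q :: real and e :: "nat \<Rightarrow> nat" and n :: nat
  assume a1: "0 < a1" and a12: "a1 \<le> a2" and q: "2 \<le> q"
    and eb: "\<forall>n\<ge>1. a1 * q ^ n / real n \<le> real (e n) \<and> real (e n) \<le> a2 * q ^ n / real n"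
  define A1 where "A1 = A1f a1"
  define A2 where "A2 = A2f a2"
  show "(real n + 1) powr (A1f a1) * q ^ n \<le> euler_prod_coeff e n \<and>
        euler_prod_coeff e n \<le> (real n + 1) powr (A2f a2) * q ^ n"
  proof (cases "n = 0")
    case True
    have "euler_prod_coeff e 0 = 1" by (simp add: coeff_eq)
    then show ?thesis using True by simp
  next
    case False
    hence n1: "n \<ge> 1" by simp
    have qn: "0 < q ^ n" using q by simp
    have "(real n + 1) powr (A1 + 1) \<le> 2 powr (A1 + 1)"
      using n1 by (intro powr_mono2') (auto simp: A1_def A1f_def)
    also have "\<dots> \<le> 2 powr (log 2 a1)" by (intro powr_mono) (auto simp: A1_def A1f_def)
    also have "\<dots> = a1" using a1 by simp
    finally have "(real n + 1) powr A1 * (real n + 1) \<le> a1" by (simp add: powr_add)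
    hence "(real n + 1) powr A1 \<le> a1 / (real n + 1)" by (simp add: field_simps)
    also have "\<dots> \<le> a1 / real n" using a1 n1 by (intro divide_left_mono) auto
    finally have "(real n + 1) powr A1 * q ^ n \<le> a1 / real n * q ^ n"
      using qn by (intro mult_right_mono) auto
    also have "\<dots> \<le> real (e n)" using eb n1 by simp
    also have "\<dots> \<le> euler_prod_coeff e n" using lower[OF n1] .
    finally have L: "(real n + 1) powr A1 * q ^ n \<le> euler_prod_coeff e n" .
    have a2: "0 \<le> a2" using a1 a12 by simp
    have "euler_prod_coeff e n \<le> q ^ n * exp (2 * a2 * ln (real n + 1) + 2 * a2)"
      using eb by (intro upper q a2) auto
    also have "exp (2 * a2 * ln (real n + 1) + 2 * a2) = (real n + 1) powr (2 * a2) * exp (2 * a2)"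
      by (simp add: exp_add powr_def mult.commute)
    also have "exp (2 * a2) = 2 powr (2 * a2 / ln 2)" by (simp add: powr_def)
    also have "\<dots> \<le> (real n + 1) powr (2 * a2 / ln 2)"
      using n1 a2 by (intro powr_mono2) auto
    finally have "euler_prod_coeff e n \<le> q ^ n * ((real n + 1) powr (2 * a2) * (real n + 1) powr (2 * a2 / ln 2))"
      using qn by (simp add: mult_left_mono)
    hence "euler_prod_coeff e n \<le> (real n + 1) powr A2 * q ^ n"
      by (simp add: A2_def A2f_def powr_add mult.commute)
    with L show ?thesis by (simp add: A1_def A2_def)
  qed
qed

end
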